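(* Let $\mathcal{SB}=\langle\mathcal{L},A,\to,\text{supp}\rangle$ be an SBAF and $S\subseteq Sent(A)$ a compatible set of sentences. Then $$Arg_w(S)=\bigcup_{i\in\mathbb{N}}R^S_i(Init(S)).$$
   Context: A language is a triple $\mathcal{L}=\langle L,\overline{\cdot},n\rangle$: $L$ is a nonempty set of sentences; $\overline{\cdot}$ assigns to each $s\in L$ a set $\overline{s}\subseteq L$ of sentences incompatible with $s$, and is symmetric; $n$ is a partial naming function assigning to an argument $a$ a sentence $n(a)\in L$ (if undefined, put $\overline{n(a)}:=\emptyset$), with $\overline{n(\langle\{t\},t\rangle)}=\emptyset$. An argument is a pair $a=\langle Prem(a),Conc(a)\rangle$ with $Prem(a)$ a nonempty finite subset of $L$ and $Conc(a)\in L$; $Sent(a):=Prem(a)\cup\{Conc(a)\}$, $Sent(E):=\bigcup_{a\in E}Sent(a)$. Argument $a$ attacks $b$ ($a\to b$) if $Conc(a)\in\overline{s}$ for some $s\in Sent(b)$ or $Conc(a)\in\overline{n(b)}$. An SBAF is $\langle\mathcal{L},A,\to,\text{supp}\rangle$ with $A$ a finite set of arguments. For $E\subseteq A$: $E$ defends $a\in A$ if for every $b\in A$ with $b\to a$ some element of $E$ attacks $b$; $E$ is conflict-free if no $a,b\in E$ with $a\to b$; admissible if conflict-free and defends all its elements. $S$ is compatible if no $s,t\in S$ with $s\in\overline t$. $Arg_s(S):=\{a\in A\mid Prem(a)\subseteq S\text{ and }\overline{n(a)}\cap S=\emptyset\}$; $R^S(E):=\{a\in A\mid a\in Arg_s(S)\text{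 and }E\text{ defends }a\}$; $R^S_0(E):=E$, $R^S_{i+1}(E):=R^S(R^S_i(E))$. For compatible $S$, $Init(S)$ is the largest admissible subset of $\{a\in A\mid Sent(a)\subseteq S\text{ and }\overline{n(a)}\cap S=\emptyset\}$, and $Arg_w(S)$ is the $\subseteq$-least set $E\subseteq A$ with $Init(S)\subseteq E$ and $R^S(E)=E$. *)

theory Defs
  imports Main
begin

text \<open>Sentences have type 's. An argument is a pair (Prem, Conc).
  The incompatibility map is inc :: 's => 's set, the partial naming function
  is nm :: 's arg => 's option.\<close>

type_synonym 's arg = "'s set \<times> 's"

definition Prem :: "'s arg \<Rightarrow> 's set" where "Prem a = fst a"
definition Conc :: "'s arg \<Rightarrow> 's" where "Conc a = snd a"
definition Sent :: "'s arg \<Rightarrow> 's set" where "Sent a = Prem a \<union> {Conc a}"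
definition SentS :: "'s arg set \<Rightarrow> 's set" where "SentS E = (\<Union>a\<in>E. Sent a)"

definition nbar :: "('s \<Rightarrow> 's set) \<Rightarrow> ('s arg \<Rightarrow> 's option) \<Rightarrow> 's arg \<Rightarrow> 's set" where
  "nbar inc nm a = (case nm a of None \<Rightarrow> {} | Some s \<Rightarrow> inc s)"

definition language :: "'s set \<Rightarrow> ('s \<Rightarrow> 's set) \<Rightarrow> ('s arg \<Rightarrow> 's option) \<Rightarrow> bool" where
  "language L inc nm \<longleftrightarrow> L \<noteq> {}
     \<and> (\<forall>s\<in>L. inc s \<subseteq> L)
     \<and> (\<forall>s\<in>L. \<forall>t\<in>L. s \<in> inc t \<longleftrightarrow> t \<in> inc s)
     \<and> (\<forall>a s. nm a = Some s \<longrightarrow> s \<in> L)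
     \<and> (\<forall>t. nbar inc nm ({t}, t) = {})"

definition is_argument :: "'s set \<Rightarrow> 's arg \<Rightarrow> bool" where
  "is_argument L a \<longleftrightarrow> Prem a \<noteq> {} \<and> finite (Prem a) \<and> Prem a \<subseteq> L \<and> Conc a \<in> L"

text \<open>An SBAF (the support relation plays no role in the statement).\<close>
definition sbaf :: "'s set \<Rightarrow> ('s \<Rightarrow> 's set) \<Rightarrow> ('s arg \<Rightarrow> 's option) \<Rightarrow> 's arg set
    \<Rightarrow> ('s arg \<Rightarrow> 's arg \<Rightarrow> bool) \<Rightarrow> bool" where
  "sbaf L inc nm A supp \<longleftrightarrow> language L inc nm \<and> finite A \<and> (\<forall>a\<in>A. is_argument L a)"

definition attacks :: "('s \<Rightarrow> 's set) \<Rightarrow> ('s arg \<Rightarrow> 's option) \<Rightarrow> 's arg \<Rightarrow> 's arg \<Rightarrow> bool" where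
  "attacks inc nm a b \<longleftrightarrow> (\<exists>s\<in>Sent b. Conc a \<in> inc s) \<or> Conc a \<in> nbar inc nm b"

definition defends :: "('s \<Rightarrow> 's set) \<Rightarrow> ('s arg \<Rightarrow> 's option) \<Rightarrow> 's arg set \<Rightarrow> 's arg set \<Rightarrow> 's arg \<Rightarrow> bool" where
  "defends inc nm A E a \<longleftrightarrow> (\<forall>b\<in>A. attacks inc nm b a \<longrightarrow> (\<exists>c\<in>E. attacks inc nm c b))"

definition conflict_free :: "('s \<Rightarrow> 's set) \<Rightarrow> ('s arg \<Rightarrow> 's option) \<Rightarrow> 's arg set \<Rightarrow> bool" where
  "conflict_free inc nm E \<longleftrightarrow> (\<forall>a\<in>E. \<forall>b\<in>E. \<not> attacks inc nm a b)"

definition admissible :: "('s \<Rightarrow> 's set) \<Rightarrow> ('s arg \<Rightarrow> 's option) \<Rightarrow> 's arg set \<Rightarrow> 's arg set \<Rightarrow> bool" where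
  "admissible inc nm A E \<longleftrightarrow> conflict_free inc nm E \<and> (\<forall>a\<in>E. defends inc nm A E a)"

definition compatible :: "('s \<Rightarrow> 's set) \<Rightarrow> 's set \<Rightarrow> bool" where
  "compatible inc S \<longleftrightarrow> (\<forall>s\<in>S. \<forall>t\<in>S. s \<notin> inc t)"

definition Arg_s :: "('s \<Rightarrow> 's set) \<Rightarrow> ('s arg \<Rightarrow> 's option) \<Rightarrow> 's arg set \<Rightarrow> 's set \<Rightarrow> 's arg set" where
  "Arg_s inc nm A S = {a\<in>A. Prem a \<subseteq> S \<and> nbar inc nm a \<inter> S = {}}"

definition RS :: "('s \<Rightarrow> 's set) \<Rightarrow> ('s arg \<Rightarrow> 's option) \<Rightarrow> 's arg set \<Rightarrow> 's set \<Rightarrow> 's arg set \<Rightarrow> 's arg set" where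
  "RS inc nm A S E = {a\<in>A. a \<in> Arg_s inc nm A S \<and> defends inc nm A E a}"

definition Init :: "('s \<Rightarrow> 's set) \<Rightarrow> ('s arg \<Rightarrow> 's option) \<Rightarrow> 's arg set \<Rightarrow> 's set \<Rightarrow> 's arg set" where
  "Init inc nm A S = (GREATEST E. E \<subseteq> {a\<in>A. Sent a \<subseteq> S \<and> nbar inc nm a \<inter> S = {}}
                                 \<and> admissible inc nm A E)"

definition Arg_w :: "('s \<Rightarrow> 's set) \<Rightarrow> ('s arg \<Rightarrow> 's option) \<Rightarrow> 's arg set \<Rightarrow> 's set \<Rightarrow> 's arg set" where
  "Arg_w inc nm A S = (LEAST E. E \<subseteq> A \<and> Init inc nm A S \<subseteq> E \<and> RS inc nm A S E = E)"

end

theory Submission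
  imports Defs
begin

lemma RS_mono: "E \<subseteq> E' \<Longrightarrow> RS inc nm A S E \<subseteq> RS inc nm A S E'"
  unfolding RS_def defends_def by blast

theorem mainTheorem7:
  fixes L :: "'s set" and inc :: "'s \<Rightarrow> 's set" and nm :: "'s arg \<Rightarrow> 's option"
    and A :: "'s arg set" and supp :: "'s arg \<Rightarrow> 's arg \<Rightarrow> bool" and S :: "'s set"
  assumes "sbaf L inc nm A supp"
    and "S \<subseteq> SentS A"
    and "compatible inc S"
  shows "Arg_w inc nm A S = (\<Union>i::nat. (RS inc nm A S ^^ i) (Init inc nm A S))"
proof -
  have finA: "finite A" using assms(1) unfolding sbaf_def by blast
  define C where "C = {a\<in>A. Sent a \<subseteq> S \<and> nbar inc nm a \<inter> S = {}}"
  define P where "P = (\<lambda>E. E \<subseteq> C \<and> admissible inc nm A E)"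
  define U0 where "U0 = \<Union>{E. P E}"
  have cfC: "\<And>a b. a \<in> C \<Longrightarrow> b \<in> C \<Longrightarrow> \<not> attacks inc nm a b"
  proof
    fix a b assume a: "a \<in> C" and b: "b \<in> C" and at: "attacks inc nm a b"
    have ca: "Conc a \<in> S" using a unfolding C_def Sent_def by auto
    from at show False
    proof (unfold attacks_def, elim disjE bexE)
      fix s assume "s \<in> Sent b" "Conc a \<in> inc s"
      then show False using b ca assms(3) unfolding C_def compatible_def by blast
    next
      assume "Conc a \<in> nbar inc nm b"
      then show False using b ca unfolding C_def by blast
    qed
  qed
  have PU0: "P U0"
  proof -
    have sub: "U0 \<subseteq> C" unfolding U0_def P_def by blast
    have cf: "conflict_free inc nm U0" unfolding conflict_free_def using sub cfC by blast
    have df: "\<forall>a\<in>U0. defends inc nm A U0 a"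
      unfolding U0_def P_def admissible_def defends_def by blast
    show ?thesis unfolding P_def admissible_def using sub cf df by blast
  qed
  have IU0: "Init inc nm A S = U0"
  proof -
    have "Init inc nm A S = Greatest P" unfolding Init_def P_def C_def by simp
    also have "Greatest P = U0"
    proof (rule Greatest_equality[of P])
      show "P U0" by (rule PU0)
      show "\<And>y. P y \<Longrightarrow> y \<le> U0" unfolding U0_def by blast
    qed
    finally show ?thesis .
  qed
  define R where "R = RS inc nm A S"
  define I where "I = Init inc nm A S"
  define f where "f = (\<lambda>i. (R ^^ i) I)"
  have PI: "P I" using PU0 IU0 I_def by simp
  have IR: "I \<subseteq> R I"
  proof
    fix a assume a: "a \<in> I"
    then have "a \<in> C" "defends inc nm A I a" using PI unfolding P_def admissible_def by auto
    then show "a \<in> R I" unfolding R_def RS_def Arg_s_def C_def Sent_def by auto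
  qed
  have IA: "I \<subseteq> A" using PI unfolding P_def C_def by auto
  have fS: "f (Suc i) = R (f i)" for i unfolding f_def by simp
  have chain: "f i \<subseteq> f (Suc i)" for i
  proof (induction i)
    case 0 then show ?case using IR by (simp add: f_def)
  next
    case (Suc i) then show ?case unfolding fS[of "Suc i"] fS[of i] R_def by (rule RS_mono)
  qed
  have chain2: "i \<le> j \<Longrightarrow> f i \<subseteq> f j" for i j
    using lift_Suc_mono_le[of f, OF chain] by blast
  have fA: "f i \<subseteq> A" for i
  proof (cases i)
    case 0 then show ?thesis using IA by (simp add: f_def)
  next
    case (Suc k) then show ?thesis using fS[of k] unfolding R_def RS_def by auto
  qed
  have "finite (range f)"
    by (rule finite_subset[of _ "Pow A"]) (use fA finA in auto)
  hence "\<not> inj f" using finite_imageD[of f UNIV] by auto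
  then obtain i j where ij: "i \<noteq> j" "f i = f j" unfolding inj_def by blast
  obtain n where n: "f n = f (Suc n)"
  proof (cases "i < j")
    case True
    then have "f i \<subseteq> f (Suc i)" "f (Suc i) \<subseteq> f j" using chain chain2[of "Suc i" j] by auto
    then show ?thesis using that[of i] ij by auto
  next
    case False
    then have "j < i" using ij by simp
    then have "f j \<subseteq> f (Suc j)" "f (Suc j) \<subseteq> f i" using chain chain2[of "Suc j" i] by auto
    then show ?thesis using that[of j] ij by auto
  qed
  have fixp: "R (f n) = f n" using n fS[of n] by metis
  have stab: "k \<ge> n \<Longrightarrow> f k = f n" for k
  proof (induction k rule: dec_induct)
    case base then show ?case by simp
  next
    case (step k) then show ?case using fS[of k] fixp by metis
  qed
  have Ueq: "(\<Union>i. f i) = f n"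
  proof
    show "(\<Union>i. f i) \<subseteq> f n"
    proof
      fix x assume "x \<in> (\<Union>i. f i)"
      then obtain k where k: "x \<in> f k" by blast
      show "x \<in> f n"
      proof (cases "k \<le> n")
        case True then show ?thesis using chain2 k by blast
      next
        case False then show ?thesis using stab[of k] k by simp
      qed
    qed
  qed blast
  have least: "E \<subseteq> A \<and> I \<subseteq> E \<and> R E = E \<Longrightarrow> f k \<subseteq> E" for E k
  proof (induction k)
    case 0 then show ?case by (simp add: f_def)
  next
    case (Suc k)
    then have "R (f k) \<subseteq> R E" unfolding R_def by (intro RS_mono) auto
    then show ?case using Suc.prems fS[of k] by simp
  qed
  have "Arg_w inc nm A S = f n"
    unfolding Arg_w_def R_def[symmetric] I_def[symmetric]
  proof (rule Least_equality)
    have "I \<subseteq> f n" using chain2[of 0 n] by (simp add: f_def)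
    then show "f n \<subseteq> A \<and> I \<subseteq> f n \<and> R (f n) = f n" using fA fixp by blast
    show "\<And>y. y \<subseteq> A \<and> I \<subseteq> y \<and> R y = y \<Longrightarrow> f n \<le> y" using least by blast
  qed
  then show ?thesis using Ueq unfolding f_def R_def I_def by simp
qed

end
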